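(* Let $(G,g)$ be an eight-dimensional semi-Riemannian Lie group with a subgroup $K\cong\mathrm{SU}(2)\times\mathrm{SU}(2)$ generating a left-invariant conformal foliation $\mathcal F$ on $G$. Let $\mathfrak g=\mathfrak k\oplus\mathfrak m$ be the orthogonal decomposition of the Lie algebra of $G$ with $\mathfrak k=\mathfrak{su}(2)\times\mathfrak{su}(2)$, and let $\{A,B,C,R,S,T,X,Y\}$ be an orthonormal basis for $\mathfrak g$ such that $A,B,C$ span the first factor, $R,S,T$ the second, with $[A,B]=2C$, $[C,A]=2B$, $[B,C]=2A$, $[R,S]=2T$, $[T,R]=2S$, $[S,T]=2R$. In this setting the brackets have the form $[A,X]=-b_{11}B-c_{11}C$, $[A,Y]=-b_{21}B-c_{21}C$, $[B,X]=b_{11}A-c_{12}C$, $[B,Y]=b_{21}A-c_{22}C$, $[C,X]=c_{11}A+c_{12}B$, $[C,Y]=c_{21}A+c_{22}B$, $[R,X]=-s_{14}S-t_{14}T$, $[R,Y]=-s_{24}S-t_{24}T$, $[S,X]=s_{14}R-t_{15}T$, $[S,Y]=s_{24}R-t_{25}T$, $[T,X]=t_{14}R+t_{15}S$, $[T,Y]=t_{24}R+t_{25}S$ for real numbers $b_{ij},c_{ij},s_{ij},t_{ij}$. Then the foliation $\mathcal F$ is semi-Riemannian and minimal. It is totally geodesic if and only if $$0=(\varepsilon_B-\varepsilon_A)b_{11}=(\varepsilon_B-\varepsilon_A)b_{21}=(\varepsilon_C-\varepsilon_A)c_{11}=(\varepsilon_C-\varepsilon_A)c_{21}=(\varepsilon_C-\varepsilon_B)c_{12}=(\varepsilon_C-\varepsilon_B)c_{22},$$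 $$0=(\varepsilon_S-\varepsilon_R)s_{14}=(\varepsilon_S-\varepsilon_R)s_{24}=(\varepsilon_T-\varepsilon_R)t_{14}=(\varepsilon_T-\varepsilon_R)t_{24}=(\varepsilon_T-\varepsilon_S)t_{15}=(\varepsilon_T-\varepsilon_S)t_{25}.$$
   Context: A semi-Riemannian Lie group $(G,g)$ is a Lie group with a left-invariant non-degenerate metric $g$ of arbitrary signature; its Lie algebra is identified with the left-invariant vector fields. $K$ generates the left-invariant foliation $\mathcal F$ by left translates of $K$, with tangent distribution $\mathcal V$ spanned by $\mathfrak k$ and orthogonal complement $\mathcal H$ spanned by $\mathfrak m$; $\mathcal V,\mathcal H$ also denote orthogonal projections. Orthonormal means $g(E_i,E_j)=\varepsilon_{E_i}\delta_{ij}$, $\varepsilon_{E_i}=g(E_i,E_i)\in\{\pm1\}$. With $\nabla$ the Levi-Civita connection: $B^{\mathcal H}(E,F)=\tfrac12\mathcal V(\nabla_EF+\nabla_FE)$ ($E,F\in\mathcal H$), $B^{\mathcal V}(E,F)=\tfrac12\mathcal H(\nabla_EF+\nabla_FE)$ ($E,F\in\mathcal V$). $\mathcal F$ is conformal if $B^{\mathcal H}=g\otimes V$ for some vector field $V$ in $\mathcal V$, semi-Riemannian if $B^{\mathcal H}=0$, minimal if $\sum_k\varepsilon_{V_k}B^{\mathcal V}(V_k,V_k)=0$ for an orthonormal basis $\{V_k\}$ of $\mathcal V$, and totally geodesic if $B^{\mathcal V}=0$. *)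

theory Defs
  imports "HOL-Analysis.Analysis"
begin

text \<open>All objects are left-invariant, so everything is expressed on the Lie algebra:
  a real vector space 'v with Lie bracket br and non-degenerate symmetric bilinear form g.\<close>

definition lie_bracket :: "('v::real_vector \<Rightarrow> 'v \<Rightarrow> 'v) \<Rightarrow> bool" where
  "lie_bracket br \<longleftrightarrow> bilinear br \<and> (\<forall>x. br x x = 0) \<and>
     (\<forall>x y z. br x (br y z) + br y (br z x) + br z (br x y) = 0)"

definition semi_riem_metric :: "('v::real_vector \<Rightarrow> 'v \<Rightarrow> real) \<Rightarrow> bool" where
  "semi_riem_metric g \<longleftrightarrow> bilinear g \<and> (\<forall>x y. g x y = g y x) \<and>
     (\<forall>x. (\<forall>y. g x y = 0) \<longrightarrow> x = 0)"

definition orthonormal_basis :: "('v::real_vector \<Rightarrow> 'v \<Rightarrow> real) \<Rightarrow> 'v set \<Rightarrow> 'v list \<Rightarrow> bool" where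
  "orthonormal_basis g W vs \<longleftrightarrow> distinct vs \<and> set vs \<subseteq> W \<and> span (set vs) = W \<and>
     (\<forall>i<length vs. \<forall>j<length vs. i \<noteq> j \<longrightarrow> g (vs!i) (vs!j) = 0) \<and>
     (\<forall>i<length vs. g (vs!i) (vs!i) = 1 \<or> g (vs!i) (vs!i) = -1)"

text \<open>Levi-Civita connection on left-invariant vector fields (Koszul formula).\<close>
definition lc_conn :: "('v::real_vector \<Rightarrow> 'v \<Rightarrow> real) \<Rightarrow> ('v \<Rightarrow> 'v \<Rightarrow> 'v) \<Rightarrow> 'v \<Rightarrow> 'v \<Rightarrow> 'v" where
  "lc_conn g br E F = (THE v. \<forall>Z. g v Z = (g (br E F) Z - g (br F Z) E + g (br Z E) F) / 2)"

definition orth_compl :: "('v::real_vector \<Rightarrow> 'v \<Rightarrow> real) \<Rightarrow> 'v set \<Rightarrow> 'v set" where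
  "orth_compl g W = {Z. \<forall>w\<in>W. g Z w = 0}"

definition orth_proj :: "('v::real_vector \<Rightarrow> 'v \<Rightarrow> real) \<Rightarrow> 'v set \<Rightarrow> 'v \<Rightarrow> 'v" where
  "orth_proj g W Z = (THE v. v \<in> W \<and> (\<forall>w\<in>W. g (Z - v) w = 0))"

text \<open>Second fundamental forms; k is the vertical subspace, m = orth_compl g k the horizontal one.\<close>
definition BH :: "('v::real_vector \<Rightarrow> 'v \<Rightarrow> real) \<Rightarrow> ('v \<Rightarrow> 'v \<Rightarrow> 'v) \<Rightarrow> 'v set \<Rightarrow> 'v \<Rightarrow> 'v \<Rightarrow> 'v" where
  "BH g br k E F = (1/2) *\<^sub>R orth_proj g k (lc_conn g br E F + lc_conn g br F E)"

definition BV :: "('v::real_vector \<Rightarrow> 'v \<Rightarrow> real) \<Rightarrow> ('v \<Rightarrow> 'v \<Rightarrow> 'v) \<Rightarrow> 'v set \<Rightarrow> 'v \<Rightarrow> 'v \<Rightarrow> 'v" where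
  "BV g br k E F = (1/2) *\<^sub>R orth_proj g (orth_compl g k) (lc_conn g br E F + lc_conn g br F E)"

definition conformal_fol :: "('v::real_vector \<Rightarrow> 'v \<Rightarrow> real) \<Rightarrow> ('v \<Rightarrow> 'v \<Rightarrow> 'v) \<Rightarrow> 'v set \<Rightarrow> bool" where
  "conformal_fol g br k \<longleftrightarrow> (\<exists>V\<in>k. \<forall>E\<in>orth_compl g k. \<forall>F\<in>orth_compl g k.
      BH g br k E F = g E F *\<^sub>R V)"

definition semi_riem_fol :: "('v::real_vector \<Rightarrow> 'v \<Rightarrow> real) \<Rightarrow> ('v \<Rightarrow> 'v \<Rightarrow> 'v) \<Rightarrow> 'v set \<Rightarrow> bool" where
  "semi_riem_fol g br k \<longleftrightarrow> (\<forall>E\<in>orth_compl g k. \<forall>F\<in>orth_compl g k. BH g br k E F = 0)"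

definition minimal_fol :: "('v::real_vector \<Rightarrow> 'v \<Rightarrow> real) \<Rightarrow> ('v \<Rightarrow> 'v \<Rightarrow> 'v) \<Rightarrow> 'v set \<Rightarrow> bool" where
  "minimal_fol g br k \<longleftrightarrow> (\<forall>vs. orthonormal_basis g k vs \<longrightarrow>
      (\<Sum>i<length vs. g (vs!i) (vs!i) *\<^sub>R BV g br k (vs!i) (vs!i)) = 0)"

definition totally_geodesic_fol :: "('v::real_vector \<Rightarrow> 'v \<Rightarrow> real) \<Rightarrow> ('v \<Rightarrow> 'v \<Rightarrow> 'v) \<Rightarrow> 'v set \<Rightarrow> bool" where
  "totally_geodesic_fol g br k \<longleftrightarrow> (\<forall>E\<in>k. \<forall>F\<in>k. BV g br k E F = 0)"

end

theory Submission
  imports Defs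
begin

lemma bil_sumL:
  assumes "bilinear h" shows "h (sum f I) z = (\<Sum>i\<in>I. h (f i) z)"
proof -
  have "linear (\<lambda>x. h x z)" using assms by (simp add: bilinear_def)
  from real_vector.linear_sum[OF this] show ?thesis .
qed

lemma bil_sumR:
  assumes "bilinear h" shows "h z (sum f I) = (\<Sum>i\<in>I. h z (f i))"
proof -
  have "linear (\<lambda>x. h z x)" using assms by (simp add: bilinear_def)
  from real_vector.linear_sum[OF this] show ?thesis .
qed

lemma trace_inv:
  fixes g q :: "'v::real_vector \<Rightarrow> 'v \<Rightarrow> real"
  assumes gb: "bilinear g" and gs: "\<And>x y. g x y = g y x" and qb: "bilinear q"
    and expV: "\<And>w. w \<in> W \<Longrightarrow> w = (\<Sum>i<n. (e i * g w (V i)) *\<^sub>R V i)"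
    and expU: "\<And>w. w \<in> W \<Longrightarrow> w = (\<Sum>j<m. (d j * g w (U j)) *\<^sub>R U j)"
    and VW: "\<And>i. i < n \<Longrightarrow> V i \<in> W" and UW: "\<And>j. j < m \<Longrightarrow> U j \<in> W"
  shows "(\<Sum>i<n. e i * q (V i) (V i)) = (\<Sum>j<m. d j * q (U j) (U j))"
proof -
  have "(\<Sum>i<n. e i * q (V i) (V i)) = (\<Sum>i<n. e i * q (V i) (\<Sum>j<m. (d j * g (V i) (U j)) *\<^sub>R U j))"
    using expU[OF VW] by (intro sum.cong) auto
  also have "\<dots> = (\<Sum>i<n. \<Sum>j<m. e i * d j * g (V i) (U j) * q (V i) (U j))"
    by (simp add: bil_sumR[OF qb] bilinear_rmul[OF qb] sum_distrib_left mult.assoc)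
  also have "\<dots> = (\<Sum>j<m. \<Sum>i<n. e i * d j * g (V i) (U j) * q (V i) (U j))"
    by (rule sum.swap)
  also have "\<dots> = (\<Sum>j<m. d j * q (\<Sum>i<n. (e i * g (U j) (V i)) *\<^sub>R V i) (U j))"
    by (simp add: bil_sumL[OF qb] bilinear_lmul[OF qb] sum_distrib_left gs[of "U _"] mult_ac)
  also have "\<dots> = (\<Sum>j<m. d j * q (U j) (U j))"
    using expV[OF UW] by (intro sum.cong) auto
  finally show ?thesis .
qed

lemma proj_prop:
  fixes g :: "'v::real_vector \<Rightarrow> 'v \<Rightarrow> real"
  assumes gb: "bilinear g" and ex: "\<exists>p\<in>W. \<forall>w\<in>W. g (u - p) w = 0"
    and nd: "\<And>d. d \<in> W \<Longrightarrow> (\<forall>w\<in>W. g d w = 0) \<Longrightarrow> d = 0"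
    and sub: "subspace W"
  shows "orth_proj g W u \<in> W \<and> (\<forall>w\<in>W. g (u - orth_proj g W u) w = 0)"
proof -
  have "\<exists>!v. v \<in> W \<and> (\<forall>w\<in>W. g (u - v) w = 0)"
  proof (rule ex_ex1I)
    show "\<exists>v. v \<in> W \<and> (\<forall>w\<in>W. g (u - v) w = 0)" using ex by blast
  next
    fix p q assume p: "p \<in> W \<and> (\<forall>w\<in>W. g (u - p) w = 0)" and q: "q \<in> W \<and> (\<forall>w\<in>W. g (u - q) w = 0)"
    have "p - q \<in> W" using p q sub by (simp add: real_vector.subspace_diff)
    moreover have "\<forall>w\<in>W. g (p - q) w = 0"
    proof
      fix w assume "w \<in> W"
      have "g (p - q) w = g (u - q) w - g (u - p) w" by (simp add: bilinear_lsub[OF gb])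
      then show "g (p - q) w = 0" using p q \<open>w \<in> W\<close> by simp
    qed
    ultimately show "p = q" using nd by force
  qed
  from theI'[OF this] show ?thesis unfolding orth_proj_def .
qed

lemma proj0:
  fixes g :: "'v::real_vector \<Rightarrow> 'v \<Rightarrow> real"
  assumes gb: "bilinear g" and u: "\<forall>w\<in>W. g u w = 0"
    and nd: "\<And>d. d \<in> W \<Longrightarrow> (\<forall>w\<in>W. g d w = 0) \<Longrightarrow> d = 0"
    and sub: "subspace W"
  shows "orth_proj g W u = 0"
  unfolding orth_proj_def
proof (rule the_equality)
  show "0 \<in> W \<and> (\<forall>w\<in>W. g (u - 0) w = 0)" using u sub by (simp add: real_vector.subspace_0)
next
  fix v assume v: "v \<in> W \<and> (\<forall>w\<in>W. g (u - v) w = 0)"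
  have "\<forall>w\<in>W. g v w = 0"
  proof
    fix w assume "w \<in> W"
    have "g v w = g u w - g (u - v) w" by (simp add: bilinear_lsub[OF gb])
    then show "g v w = 0" using u v \<open>w \<in> W\<close> by simp
  qed
  then show "v = 0" using nd v by blast
qed

lemma lc_prop:
  fixes g :: "'v::real_vector \<Rightarrow> 'v \<Rightarrow> real"
  assumes gb: "bilinear g" and nd: "\<And>x. (\<forall>y. g x y = 0) \<Longrightarrow> x = 0"
    and ex: "\<exists>v. \<forall>Z. g v Z = (g (br E F) Z - g (br F Z) E + g (br Z E) F) / 2"
  shows "g (lc_conn g br E F) Z = (g (br E F) Z - g (br F Z) E + g (br Z E) F) / 2"
proof -
  have "\<exists>!v. \<forall>Z. g v Z = (g (br E F) Z - g (br F Z) E + g (br Z E) F) / 2"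
  proof (rule ex_ex1I)
    show "\<exists>v. \<forall>Z. g v Z = (g (br E F) Z - g (br F Z) E + g (br Z E) F) / 2" by (rule ex)
  next
    fix p q assume p: "\<forall>Z. g p Z = (g (br E F) Z - g (br F Z) E + g (br Z E) F) / 2"
      and q: "\<forall>Z. g q Z = (g (br E F) Z - g (br F Z) E + g (br Z E) F) / 2"
    have "\<forall>y. g (p - q) y = 0"
    proof
      fix y show "g (p - q) y = 0"
        using p[rule_format, of y] q[rule_format, of y] by (simp add: bilinear_lsub[OF gb])
    qed
    then show "p = q" using nd by force
  qed
  from theI'[OF this] show ?thesis unfolding lc_conn_def by blast
qed

lemma core:
  fixes g :: "'v::real_vector \<Rightarrow> 'v \<Rightarrow> real" and br :: "'v \<Rightarrow> 'v \<Rightarrow> 'v"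
    and A B C R S T X Y :: 'v and k :: "'v set"
    and b11 b21 c11 c21 c12 c22 s14 s24 t14 t24 t15 t25 :: real
  assumes gb: "bilinear g" and gs: "\<And>x y. g x y = g y x"
    and gnd: "\<And>x. (\<forall>y. g x y = 0) \<Longrightarrow> x = 0"
    and bb: "bilinear br" and anti: "\<And>x y. br y x = - br x y"
    and spanU: "span {A,B,C,R,S,T,X,Y} = UNIV"
    and orthf: "g A B = 0" "g A C = 0" "g A R = 0" "g A S = 0" "g A T = 0" "g A X = 0" "g A Y = 0" "g B A = 0" "g B C = 0" "g B R = 0" "g B S = 0" "g B T = 0" "g B X = 0" "g B Y = 0" "g C A = 0" "g C B = 0" "g C R = 0" "g C S = 0" "g C T = 0" "g C X = 0" "g C Y = 0" "g R A = 0" "g R B = 0" "g R C = 0" "g R S = 0" "g R T = 0" "g R X = 0" "g R Y = 0" "g S A = 0" "g S B = 0" "g S C = 0" "g S R = 0" "g S T = 0" "g S X = 0" "g S Y = 0" "g T A = 0" "g T B = 0" "g T C = 0" "g T R = 0" "g T S = 0" "g T X = 0" "g T Y = 0" "g X A = 0" "g X B = 0" "g X C = 0" "g X R = 0" "g X S = 0" "g X T = 0" "g X Y = 0" "g Y A = 0" "g Y B = 0" "g Y C = 0" "g Y R = 0" "g Y S = 0" "g Y T = 0" "g Y X = 0"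
    and sq: "g A A * g A A = 1" "g B B * g B B = 1" "g C C * g C C = 1"
    "g R R * g R R = 1" "g S S * g S S = 1" "g T T * g T T = 1"
    "g X X * g X X = 1" "g Y Y * g Y Y = 1"
    and k_def: "k = span {A, B, C, R, S, T}"
    and su2_1: "br A B = 2 *\<^sub>R C" "br C A = 2 *\<^sub>R B" "br B C = 2 *\<^sub>R A"
    and su2_2: "br R S = 2 *\<^sub>R T" "br T R = 2 *\<^sub>R S" "br S T = 2 *\<^sub>R R"
    and prod: "br A R = 0" "br A S = 0" "br A T = 0"
              "br B R = 0" "br B S = 0" "br B T = 0"
              "br C R = 0" "br C S = 0" "br C T = 0"
    and brX1: "br A X = - (b11 *\<^sub>R B) - c11 *\<^sub>R C" "br A Y = - (b21 *\<^sub>R B) - c21 *\<^sub>R C"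
              "br B X = b11 *\<^sub>R A - c12 *\<^sub>R C" "br B Y = b21 *\<^sub>R A - c22 *\<^sub>R C"
              "br C X = c11 *\<^sub>R A + c12 *\<^sub>R B" "br C Y = c21 *\<^sub>R A + c22 *\<^sub>R B"
    and brX2: "br R X = - (s14 *\<^sub>R S) - t14 *\<^sub>R T" "br R Y = - (s24 *\<^sub>R S) - t24 *\<^sub>R T"
              "br S X = s14 *\<^sub>R R - t15 *\<^sub>R T" "br S Y = s24 *\<^sub>R R - t25 *\<^sub>R T"
              "br T X = t14 *\<^sub>R R + t15 *\<^sub>R S" "br T Y = t24 *\<^sub>R R + t25 *\<^sub>R S"
  shows "semi_riem_fol g br k \<and> minimal_fol g br k \<and>
    (totally_geodesic_fol g br k \<longleftrightarrow>
      ((g B B - g A A) * b11 = 0 \<and> (g B B - g A A) * b21 = 0 \<and>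
       (g C C - g A A) * c11 = 0 \<and> (g C C - g A A) * c21 = 0 \<and>
       (g C C - g B B) * c12 = 0 \<and> (g C C - g B B) * c22 = 0 \<and>
       (g S S - g R R) * s14 = 0 \<and> (g S S - g R R) * s24 = 0 \<and>
       (g T T - g R R) * t14 = 0 \<and> (g T T - g R R) * t24 = 0 \<and>
       (g T T - g S S) * t15 = 0 \<and> (g T T - g S S) * t25 = 0))"
proof -
  note GS = bilinear_ladd[OF gb] bilinear_radd[OF gb] bilinear_lmul[OF gb] bilinear_rmul[OF gb]
    bilinear_lsub[OF gb] bilinear_rsub[OF gb] bilinear_lneg[OF gb] bilinear_rneg[OF gb]
    bilinear_lzero[OF gb] bilinear_rzero[OF gb]
  note BRS = bilinear_ladd[OF bb] bilinear_radd[OF bb] bilinear_lmul[OF bb] bilinear_rmul[OF bb]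
    bilinear_lsub[OF bb] bilinear_rsub[OF bb] bilinear_lneg[OF bb] bilinear_rneg[OF bb]
    bilinear_lzero[OF bb] bilinear_rzero[OF bb]
  have N: "u = 0" if "g u A = 0" "g u B = 0" "g u C = 0" "g u R = 0" "g u S = 0" "g u T = 0"
     "g u X = 0" "g u Y = 0" for u
  proof -
    have "g u y = 0" for y
    proof -
      have "y \<in> span {A,B,C,R,S,T,X,Y}" using spanU by simp
      then show ?thesis
        by (induct rule: real_vector.span_induct_alt) (use that in \<open>auto simp: GS\<close>)
    qed
    then show ?thesis using gnd by blast
  qed
  have sq2: "g A A * (g A A * c) = c" "g B B * (g B B * c) = c" "g C C * (g C C * c) = c"
    "g R R * (g R R * c) = c" "g S S * (g S S * c) = c" "g T T * (g T T * c) = c"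
    "g X X * (g X X * c) = c" "g Y Y * (g Y Y * c) = c" for c
    by (simp_all add: mult.assoc[symmetric] sq)
  have bk: "A \<in> k" "B \<in> k" "C \<in> k" "R \<in> k" "S \<in> k" "T \<in> k"
    by (simp_all add: k_def real_vector.span_base)
  have subk: "subspace k" by (simp add: k_def real_vector.subspace_span)
  have kX: "g w X = 0 \<and> g w Y = 0" if "w \<in> k" for w
  proof -
    have "w \<in> span {A,B,C,R,S,T}" using that k_def by simp
    then show ?thesis
      by (induct rule: real_vector.span_induct_alt) (auto simp: GS orthf)
  qed
  have kXs: "g X w = 0 \<and> g Y w = 0" if "w \<in> k" for w using kX[OF that] gs by metis
  define m where "m = orth_compl g k"
  have Xm: "X \<in> m" "Y \<in> m" using kXs unfolding m_def orth_compl_def by auto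
  have morth: "g w A = 0 \<and> g w B = 0 \<and> g w C = 0 \<and> g w R = 0 \<and> g w S = 0 \<and> g w T = 0"
    if "w \<in> m" for w using that bk unfolding m_def orth_compl_def by auto
  have subm: "subspace m"
    unfolding subspace_def m_def orth_compl_def by (simp add: GS)
  have ndk: "d = 0" if "d \<in> k" "\<forall>w\<in>k. g d w = 0" for d
    using that kX[OF that(1)] bk by (intro N) auto
  have ndm: "d = 0" if "d \<in> m" "\<forall>w\<in>m. g d w = 0" for d
    using that morth[OF that(1)] Xm by (intro N) auto
  have expm: "w = (g X X * g w X) *\<^sub>R X + (g Y Y * g w Y) *\<^sub>R Y" if "w \<in> m" for w
  proof -
    have "w - ((g X X * g w X) *\<^sub>R X + (g Y Y * g w Y) *\<^sub>R Y) = 0"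
      using morth[OF that] sq by (intro N) (simp_all add: GS orthf)
    then show ?thesis by simp
  qed
  have exk: "\<exists>p\<in>k. \<forall>w\<in>k. g (u - p) w = 0" for u
  proof
    let ?p = "(g A A * g u A) *\<^sub>R A + (g B B * g u B) *\<^sub>R B + (g C C * g u C) *\<^sub>R C +
      (g R R * g u R) *\<^sub>R R + (g S S * g u S) *\<^sub>R S + (g T T * g u T) *\<^sub>R T"
    show "?p \<in> k" using bk subk
      by (simp add: real_vector.subspace_add real_vector.subspace_scale)
    show "\<forall>w\<in>k. g (u - ?p) w = 0"
    proof
      fix w assume "w \<in> k"
      then have "w \<in> span {A,B,C,R,S,T}" using k_def by simp
      then show "g (u - ?p) w = 0"
      proof (induct rule: real_vector.span_induct_alt)
        case base then show ?case by (simp add: GS)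
      next
        case (step c x y)
        have "g (u - ?p) x = 0" using step(1) sq by (auto simp: GS orthf)
        then show ?case using step(2) by (simp add: GS)
      qed
    qed
  qed
  have exm: "\<exists>p\<in>m. \<forall>w\<in>m. g (u - p) w = 0" for u
  proof
    let ?p = "(g X X * g u X) *\<^sub>R X + (g Y Y * g u Y) *\<^sub>R Y"
    show "?p \<in> m" unfolding m_def orth_compl_def using kXs by (simp add: GS)
    show "\<forall>w\<in>m. g (u - ?p) w = 0"
    proof
      fix w assume w: "w \<in> m"
      have "g (u - ?p) w = g (u - ?p) ((g X X * g w X) *\<^sub>R X + (g Y Y * g w Y) *\<^sub>R Y)"
        using expm[OF w] by metis
      also have "\<dots> = 0" by (simp add: GS orthf algebra_simps sq2)
      finally show "g (u - ?p) w = 0" .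
    qed
  qed
  have PK: "orth_proj g k u \<in> k \<and> (\<forall>w\<in>k. g (u - orth_proj g k u) w = 0)" for u
    by (rule proj_prop[OF gb exk ndk subk])
  have PM: "orth_proj g m u \<in> m \<and> (\<forall>w\<in>m. g (u - orth_proj g m u) w = 0)" for u
    by (rule proj_prop[OF gb exm ndm subm])
  have PK0: "orth_proj g k u = 0" if "\<forall>w\<in>k. g u w = 0" for u
    by (rule proj0[OF gb that ndk subk])
  have PM0: "orth_proj g m u = 0" if "\<forall>w\<in>m. g u w = 0" for u
    by (rule proj0[OF gb that ndm subm])
  have Riesz: "\<exists>v. \<forall>Z. g v Z = \<phi> Z" if lin: "linear \<phi>" for \<phi>
  proof
    let ?v = "(g A A * \<phi> A) *\<^sub>R A + (g B B * \<phi> B) *\<^sub>R B + (g C C * \<phi> C) *\<^sub>R C +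
      (g R R * \<phi> R) *\<^sub>R R + (g S S * \<phi> S) *\<^sub>R S + (g T T * \<phi> T) *\<^sub>R T +
      (g X X * \<phi> X) *\<^sub>R X + (g Y Y * \<phi> Y) *\<^sub>R Y"
    show "\<forall>Z. g ?v Z = \<phi> Z"
    proof
      fix Z
      have "Z \<in> span {A,B,C,R,S,T,X,Y}" using spanU by simp
      then show "g ?v Z = \<phi> Z"
      proof (induct rule: real_vector.span_induct_alt)
        case base then show ?case by (simp add: GS real_vector.linear_0[OF lin])
      next
        case (step c x y)
        have "g ?v x = \<phi> x" using step(1) sq by (auto simp: GS orthf algebra_simps)
        then show ?case using step(2)
          by (simp add: GS real_vector.linear_add[OF lin] real_vector.linear_scale[OF lin])
      qed
    qed
  qed
  have LC: "g (lc_conn g br E F) Z = (g (br E F) Z - g (br F Z) E + g (br Z E) F) / 2" for E F Z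
  proof (rule lc_prop[OF gb gnd Riesz])
    show "linear (\<lambda>Z. (g (br E F) Z - g (br F Z) E + g (br Z E) F) / 2)"
      by (rule linearI) (simp_all add: GS BRS field_simps)
  qed
  have SS: "g (lc_conn g br E F + lc_conn g br F E) Z = g (br Z E) F + g (br Z F) E" for E F Z
    by (simp add: GS LC anti[of E F] anti[of Z F] anti[of Z E] field_simps)
  have brkX: "br w X \<in> k \<and> br w Y \<in> k" if "w \<in> k" for w
  proof -
    have "w \<in> span {A,B,C,R,S,T}" using that k_def by simp
    then show ?thesis
    proof (induct rule: real_vector.span_induct_alt)
      case base then show ?case using subk by (simp add: BRS real_vector.subspace_0)
    next
      case (step c x y)
      have "br x X \<in> k \<and> br x Y \<in> k" using step(1)
        by (auto simp: k_def BRS brX1 brX2 real_vector.span_add real_vector.span_diff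
          real_vector.span_scale real_vector.span_neg real_vector.span_base)
      then show ?case using step(2) subk
        by (simp add: BRS real_vector.subspace_add real_vector.subspace_scale)
    qed
  qed
  have brkm: "br w E \<in> k" if "w \<in> k" "E \<in> m" for w E
  proof -
    have "br w E = br w ((g X X * g E X) *\<^sub>R X + (g Y Y * g E Y) *\<^sub>R Y)"
      using expm[OF that(2)] by metis
    also have "\<dots> \<in> k" using brkX[OF that(1)] subk
      by (simp add: BRS real_vector.subspace_add real_vector.subspace_scale)
    finally show ?thesis .
  qed
  have semi: "semi_riem_fol g br k"
    unfolding semi_riem_fol_def BH_def m_def[symmetric]
  proof (intro ballI)
    fix E F assume E: "E \<in> m" and F: "F \<in> m"
    have "orth_proj g k (lc_conn g br E F + lc_conn g br F E) = 0"
    proof (rule PK0, intro ballI)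
      fix w assume w: "w \<in> k"
      have "g F (br w E) = 0" using brkm[OF w E] F unfolding m_def orth_compl_def by blast
      moreover have "g E (br w F) = 0" using brkm[OF w F] E unfolding m_def orth_compl_def by blast
      ultimately have "g (br w E) F = 0" "g (br w F) E = 0" using gs by auto
      then show "g (lc_conn g br E F + lc_conn g br F E) w = 0" by (simp add: SS)
    qed
    then show "(1 / 2) *\<^sub>R orth_proj g k (lc_conn g br E F + lc_conn g br F E) = 0" by simp
  qed
  have P6: "\<forall>w\<in>k. g (u - ((g A A * g u A) *\<^sub>R A + (g B B * g u B) *\<^sub>R B + (g C C * g u C) *\<^sub>R C +
      (g R R * g u R) *\<^sub>R R + (g S S * g u S) *\<^sub>R S + (g T T * g u T) *\<^sub>R T)) w = 0" for u
  proof
    fix w assume "w \<in> k"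
    then have "w \<in> span {A,B,C,R,S,T}" using k_def by simp
    then show "g (u - ((g A A * g u A) *\<^sub>R A + (g B B * g u B) *\<^sub>R B + (g C C * g u C) *\<^sub>R C +
      (g R R * g u R) *\<^sub>R R + (g S S * g u S) *\<^sub>R S + (g T T * g u T) *\<^sub>R T)) w = 0"
    proof (induct rule: real_vector.span_induct_alt)
      case base then show ?case by (simp add: GS)
    next
      case (step c x y)
      then show ?case using sq by (auto simp: GS orthf)
    qed
  qed
  define U where "U = [A,B,C,R,S,T]"
  have Uk: "U ! j \<in> k" if "j < 6" for j
    using that bk by (auto simp: U_def numeral_eq_Suc less_Suc_eq)
  have expU: "w = (\<Sum>j<6. (g (U!j) (U!j) * g w (U!j)) *\<^sub>R (U!j))" if w: "w \<in> k" for w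
  proof -
    let ?p = "(g A A * g w A) *\<^sub>R A + (g B B * g w B) *\<^sub>R B + (g C C * g w C) *\<^sub>R C +
      (g R R * g w R) *\<^sub>R R + (g S S * g w S) *\<^sub>R S + (g T T * g w T) *\<^sub>R T"
    have pk: "?p \<in> k" using bk subk
      by (simp add: real_vector.subspace_add real_vector.subspace_scale)
    have "w - ?p = 0"
      by (rule ndk) (use w pk subk P6[of w] in \<open>auto intro: real_vector.subspace_diff\<close>)
    then have "w = ?p" by simp
    also have "?p = (\<Sum>j<6. (g (U!j) (U!j) * g w (U!j)) *\<^sub>R (U!j))"
      by (simp add: U_def numeral_eq_Suc algebra_simps)
    finally show ?thesis .
  qed
  have BVk: "g (BV g br k E E) Z = 0" if "Z \<in> k" for E Z
  proof -
    have "orth_proj g m (lc_conn g br E E + lc_conn g br E E) \<in> m" using PM by blast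
    then have "g (orth_proj g m (lc_conn g br E E + lc_conn g br E E)) Z = 0"
      using that unfolding m_def orth_compl_def by blast
    then show ?thesis unfolding BV_def m_def[symmetric] by (simp add: GS)
  qed
  have BVm: "g (BV g br k E E) Z = g (br Z E) E" if "Z \<in> m" for E Z
  proof -
    have "g ((lc_conn g br E E + lc_conn g br E E) - orth_proj g m (lc_conn g br E E + lc_conn g br E E)) Z = 0"
      using PM that by blast
    then have "g (orth_proj g m (lc_conn g br E E + lc_conn g br E E)) Z = g (br Z E) E + g (br Z E) E"
      by (simp add: bilinear_lsub[OF gb] SS[of E E Z])
    then show ?thesis unfolding BV_def m_def[symmetric] by (simp add: GS)
  qed
  have minimal: "minimal_fol g br k"
    unfolding minimal_fol_def
  proof (intro allI impI)
    fix vs assume onbV: "orthonormal_basis g k vs"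
    define n where "n = length vs"
    define V where "V i = vs ! i" for i
    define e where "e i = g (V i) (V i)" for i
    have Vk: "V i \<in> k" if "i < n" for i
      using onbV that nth_mem[of i vs] unfolding orthonormal_basis_def V_def n_def by auto
    have spanV: "span (set vs) = k" using onbV unfolding orthonormal_basis_def by auto
    have orthV: "g (V i) (V j) = 0" if "i < n" "j < n" "i \<noteq> j" for i j
      using onbV that unfolding orthonormal_basis_def V_def n_def by auto
    have ee: "e j * c * e j = c" if "j < n" for j c
    proof -
      have "e j = 1 \<or> e j = -1" using onbV that unfolding orthonormal_basis_def V_def n_def e_def by auto
      then show ?thesis by auto
    qed
    have expV: "w = (\<Sum>i<n. (e i * g w (V i)) *\<^sub>R V i)" if w: "w \<in> k" for w
    proof -
      let ?d = "w - (\<Sum>i<n. (e i * g w (V i)) *\<^sub>R V i)"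
      have dk: "?d \<in> k" using w Vk subk
        by (auto intro!: real_vector.subspace_diff real_vector.subspace_sum real_vector.subspace_scale)
      have dV: "g ?d (V j) = 0" if "j < n" for j
      proof -
        have "(\<Sum>i<n. e i * g w (V i) * g (V i) (V j)) = (\<Sum>i<n. if i = j then e j * g w (V j) * e j else 0)"
          by (rule sum.cong) (auto simp: orthV that e_def)
        also have "\<dots> = g w (V j)" using that ee[OF that] by simp
        finally show ?thesis by (simp add: GS bil_sumL[OF gb])
      qed
      have "\<forall>y\<in>k. g ?d y = 0"
      proof
        fix y assume "y \<in> k"
        then have "y \<in> span (set vs)" using spanV by simp
        then show "g ?d y = 0"
        proof (induct rule: real_vector.span_induct_alt)
          case base then show ?case by (simp add: GS)
        next
          case (step c x y)
          obtain j where "j < n" "x = V j" using step(1) unfolding in_set_conv_nth V_def n_def by auto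
          then show ?case using step(2) dV by (simp add: GS)
        qed
      qed
      then have "?d = 0" using ndk dk by blast
      then show ?thesis by simp
    qed
    have antiX: "br X E = - br E X" "br Y E = - br E Y" for E by (rule anti)+
    have trX: "g A A * g (br X A) A + g B B * g (br X B) B + g C C * g (br X C) C +
      g R R * g (br X R) R + g S S * g (br X S) S + g T T * g (br X T) T = 0"
      by (simp add: GS orthf antiX[of A] antiX[of B] antiX[of C] antiX[of R] antiX[of S] antiX[of T] brX1 brX2)
    have trY: "g A A * g (br Y A) A + g B B * g (br Y B) B + g C C * g (br Y C) C +
      g R R * g (br Y R) R + g S S * g (br Y S) S + g T T * g (br Y T) T = 0"
      by (simp add: GS orthf antiX[of A] antiX[of B] antiX[of C] antiX[of R] antiX[of S] antiX[of T] brX1 brX2)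
    have trace: "(\<Sum>i<n. e i * g (br Z (V i)) (V i)) = 0" if Z: "Z = X \<or> Z = Y" for Z
    proof -
      have qb: "bilinear (\<lambda>E F. g (br Z E) F)"
        unfolding bilinear_def by (auto intro!: linearI simp: GS BRS)
      have "(\<Sum>i<n. e i * g (br Z (V i)) (V i)) = (\<Sum>j<6. g (U!j) (U!j) * g (br Z (U!j)) (U!j))"
        by (rule trace_inv[OF gb gs qb, where W=k and n=n and e=e and V=V and m=6 and d="\<lambda>j. g (U!j) (U!j)" and U="\<lambda>j. U!j"])
          (use expV expU Vk Uk in auto)
      also have "\<dots> = 0" using Z trX trY by (auto simp: U_def numeral_eq_Suc)
      finally show ?thesis .
    qed
    have "(\<Sum>i<n. e i *\<^sub>R BV g br k (V i) (V i)) = 0"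
    proof (rule N)
      have gsum: "g (\<Sum>i<n. e i *\<^sub>R BV g br k (V i) (V i)) Z = (\<Sum>i<n. e i * g (BV g br k (V i) (V i)) Z)" for Z
        by (simp add: bil_sumL[OF gb] GS)
      show "g (\<Sum>i<n. e i *\<^sub>R BV g br k (V i) (V i)) A = 0" by (simp add: gsum BVk bk)
      show "g (\<Sum>i<n. e i *\<^sub>R BV g br k (V i) (V i)) B = 0" by (simp add: gsum BVk bk)
      show "g (\<Sum>i<n. e i *\<^sub>R BV g br k (V i) (V i)) C = 0" by (simp add: gsum BVk bk)
      show "g (\<Sum>i<n. e i *\<^sub>R BV g br k (V i) (V i)) R = 0" by (simp add: gsum BVk bk)
      show "g (\<Sum>i<n. e i *\<^sub>R BV g br k (V i) (V i)) S = 0" by (simp add: gsum BVk bk)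
      show "g (\<Sum>i<n. e i *\<^sub>R BV g br k (V i) (V i)) T = 0" by (simp add: gsum BVk bk)
      show "g (\<Sum>i<n. e i *\<^sub>R BV g br k (V i) (V i)) X = 0" using trace[of X] by (simp add: gsum BVm Xm)
      show "g (\<Sum>i<n. e i *\<^sub>R BV g br k (V i) (V i)) Y = 0" using trace[of Y] by (simp add: gsum BVm Xm)
    qed
    then show "(\<Sum>i<length vs. g (vs ! i) (vs ! i) *\<^sub>R BV g br k (vs ! i) (vs ! i)) = 0"
      unfolding n_def V_def e_def .
  qed
  have antiX: "br X E = - br E X" "br Y E = - br E Y" for E by (rule anti)+
  note AX = antiX[of A] antiX[of B] antiX[of C] antiX[of R] antiX[of S] antiX[of T]
  have BVeq: "BV g br k E F = 0 \<longleftrightarrow> (\<forall>Z\<in>m. g (br Z E) F + g (br Z F) E = 0)" for E F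
  proof
    assume "BV g br k E F = 0"
    then have p0: "orth_proj g m (lc_conn g br E F + lc_conn g br F E) = 0"
      unfolding BV_def m_def[symmetric] by simp
    show "\<forall>Z\<in>m. g (br Z E) F + g (br Z F) E = 0"
    proof
      fix Z assume "Z \<in> m"
      then have "g ((lc_conn g br E F + lc_conn g br F E) - orth_proj g m (lc_conn g br E F + lc_conn g br F E)) Z = 0"
        using PM by blast
      then show "g (br Z E) F + g (br Z F) E = 0" using p0 by (simp add: SS)
    qed
  next
    assume H: "\<forall>Z\<in>m. g (br Z E) F + g (br Z F) E = 0"
    have "orth_proj g m (lc_conn g br E F + lc_conn g br F E) = 0"
      by (rule PM0) (use H in \<open>simp add: SS\<close>)
    then show "BV g br k E F = 0" unfolding BV_def m_def[symmetric] by simp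
  qed
  have HX: "g (br X A) B + g (br X B) A = b11 * (g B B - g A A)"
     "g (br Y A) B + g (br Y B) A = b21 * (g B B - g A A)"
     "g (br X A) C + g (br X C) A = c11 * (g C C - g A A)"
     "g (br Y A) C + g (br Y C) A = c21 * (g C C - g A A)"
     "g (br X B) C + g (br X C) B = c12 * (g C C - g B B)"
     "g (br Y B) C + g (br Y C) B = c22 * (g C C - g B B)"
     "g (br X R) S + g (br X S) R = s14 * (g S S - g R R)"
     "g (br Y R) S + g (br Y S) R = s24 * (g S S - g R R)"
     "g (br X R) T + g (br X T) R = t14 * (g T T - g R R)"
     "g (br Y R) T + g (br Y T) R = t24 * (g T T - g R R)"
     "g (br X S) T + g (br X T) S = t15 * (g T T - g S S)"
     "g (br Y S) T + g (br Y T) S = t25 * (g T T - g S S)"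
    by (simp_all add: GS orthf AX brX1 brX2 algebra_simps)
  have tg: "totally_geodesic_fol g br k \<longleftrightarrow>
      ((g B B - g A A) * b11 = 0 \<and> (g B B - g A A) * b21 = 0 \<and>
       (g C C - g A A) * c11 = 0 \<and> (g C C - g A A) * c21 = 0 \<and>
       (g C C - g B B) * c12 = 0 \<and> (g C C - g B B) * c22 = 0 \<and>
       (g S S - g R R) * s14 = 0 \<and> (g S S - g R R) * s24 = 0 \<and>
       (g T T - g R R) * t14 = 0 \<and> (g T T - g R R) * t24 = 0 \<and>
       (g T T - g S S) * t15 = 0 \<and> (g T T - g S S) * t25 = 0)" (is "_ \<longleftrightarrow> ?c")
  proof
    assume "totally_geodesic_fol g br k"
    then have H: "g (br Z E) F + g (br Z F) E = 0" if "E \<in> k" "F \<in> k" "Z \<in> m" for E F Z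
      using that BVeq unfolding totally_geodesic_fol_def by blast
    show ?c using H[OF bk(1) bk(2) Xm(1)] H[OF bk(1) bk(2) Xm(2)]
      H[OF bk(1) bk(3) Xm(1)] H[OF bk(1) bk(3) Xm(2)]
      H[OF bk(2) bk(3) Xm(1)] H[OF bk(2) bk(3) Xm(2)]
      H[OF bk(4) bk(5) Xm(1)] H[OF bk(4) bk(5) Xm(2)]
      H[OF bk(4) bk(6) Xm(1)] H[OF bk(4) bk(6) Xm(2)]
      H[OF bk(5) bk(6) Xm(1)] H[OF bk(5) bk(6) Xm(2)]
      unfolding HX by (simp add: mult.commute)
  next
    assume c: ?c
    have cc: "b11 * (g B B - g A A) = 0" "b21 * (g B B - g A A) = 0"
       "c11 * (g C C - g A A) = 0" "c21 * (g C C - g A A) = 0"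
       "c12 * (g C C - g B B) = 0" "c22 * (g C C - g B B) = 0"
       "s14 * (g S S - g R R) = 0" "s24 * (g S S - g R R) = 0"
       "t14 * (g T T - g R R) = 0" "t24 * (g T T - g R R) = 0"
       "t15 * (g T T - g S S) = 0" "t25 * (g T T - g S S) = 0"
      using c by (simp_all only: mult.commute)
    have baseX: "g (br X E) F + g (br X F) E = 0" if "E \<in> {A,B,C,R,S,T}" "F \<in> {A,B,C,R,S,T}" for E F
    proof -
    have "g (br X A) A + g (br X A) A = 0" by (simp add: GS orthf AX brX1 brX2)
    moreover
    have "g (br X A) B + g (br X B) A = 0" by (simp only: HX(1) cc(1))
    moreover
    have "g (br X B) A + g (br X A) B = 0" using calculation by (simp add: add.commute)
    moreover
    have "g (br X A) C + g (br X C) A = 0" by (simp only: HX(3) cc(3))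
    moreover
    have "g (br X C) A + g (br X A) C = 0" using calculation by (simp add: add.commute)
    moreover
    have "g (br X A) R + g (br X R) A = 0" by (simp add: GS orthf AX brX1 brX2)
    moreover
    have "g (br X R) A + g (br X A) R = 0" using calculation by (simp add: add.commute)
    moreover
    have "g (br X A) S + g (br X S) A = 0" by (simp add: GS orthf AX brX1 brX2)
    moreover
    have "g (br X S) A + g (br X A) S = 0" using calculation by (simp add: add.commute)
    moreover
    have "g (br X A) T + g (br X T) A = 0" by (simp add: GS orthf AX brX1 brX2)
    moreover
    have "g (br X T) A + g (br X A) T = 0" using calculation by (simp add: add.commute)
    moreover
    have "g (br X B) B + g (br X B) B = 0" by (simp add: GS orthf AX brX1 brX2)
    moreover
    have "g (br X B) C + g (br X C) B = 0" by (simp only: HX(5) cc(5))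
    moreover
    have "g (br X C) B + g (br X B) C = 0" using calculation by (simp add: add.commute)
    moreover
    have "g (br X B) R + g (br X R) B = 0" by (simp add: GS orthf AX brX1 brX2)
    moreover
    have "g (br X R) B + g (br X B) R = 0" using calculation by (simp add: add.commute)
    moreover
    have "g (br X B) S + g (br X S) B = 0" by (simp add: GS orthf AX brX1 brX2)
    moreover
    have "g (br X S) B + g (br X B) S = 0" using calculation by (simp add: add.commute)
    moreover
    have "g (br X B) T + g (br X T) B = 0" by (simp add: GS orthf AX brX1 brX2)
    moreover
    have "g (br X T) B + g (br X B) T = 0" using calculation by (simp add: add.commute)
    moreover
    have "g (br X C) C + g (br X C) C = 0" by (simp add: GS orthf AX brX1 brX2)
    moreover
    have "g (br X C) R + g (br X R) C = 0" by (simp add: GS orthf AX brX1 brX2)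
    moreover
    have "g (br X R) C + g (br X C) R = 0" using calculation by (simp add: add.commute)
    moreover
    have "g (br X C) S + g (br X S) C = 0" by (simp add: GS orthf AX brX1 brX2)
    moreover
    have "g (br X S) C + g (br X C) S = 0" using calculation by (simp add: add.commute)
    moreover
    have "g (br X C) T + g (br X T) C = 0" by (simp add: GS orthf AX brX1 brX2)
    moreover
    have "g (br X T) C + g (br X C) T = 0" using calculation by (simp add: add.commute)
    moreover
    have "g (br X R) R + g (br X R) R = 0" by (simp add: GS orthf AX brX1 brX2)
    moreover
    have "g (br X R) S + g (br X S) R = 0" by (simp only: HX(7) cc(7))
    moreover
    have "g (br X S) R + g (br X R) S = 0" using calculation by (simp add: add.commute)
    moreover
    have "g (br X R) T + g (br X T) R = 0" by (simp only: HX(9) cc(9))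
    moreover
    have "g (br X T) R + g (br X R) T = 0" using calculation by (simp add: add.commute)
    moreover
    have "g (br X S) S + g (br X S) S = 0" by (simp add: GS orthf AX brX1 brX2)
    moreover
    have "g (br X S) T + g (br X T) S = 0" by (simp only: HX(11) cc(11))
    moreover
    have "g (br X T) S + g (br X S) T = 0" using calculation by (simp add: add.commute)
    moreover
    have "g (br X T) T + g (br X T) T = 0" by (simp add: GS orthf AX brX1 brX2)
      ultimately show ?thesis using that by auto
    qed
    have baseY: "g (br Y E) F + g (br Y F) E = 0" if "E \<in> {A,B,C,R,S,T}" "F \<in> {A,B,C,R,S,T}" for E F
    proof -
    have "g (br Y A) A + g (br Y A) A = 0" by (simp add: GS orthf AX brX1 brX2)
    moreover
    have "g (br Y A) B + g (br Y B) A = 0" by (simp only: HX(2) cc(2))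
    moreover
    have "g (br Y B) A + g (br Y A) B = 0" using calculation by (simp add: add.commute)
    moreover
    have "g (br Y A) C + g (br Y C) A = 0" by (simp only: HX(4) cc(4))
    moreover
    have "g (br Y C) A + g (br Y A) C = 0" using calculation by (simp add: add.commute)
    moreover
    have "g (br Y A) R + g (br Y R) A = 0" by (simp add: GS orthf AX brX1 brX2)
    moreover
    have "g (br Y R) A + g (br Y A) R = 0" using calculation by (simp add: add.commute)
    moreover
    have "g (br Y A) S + g (br Y S) A = 0" by (simp add: GS orthf AX brX1 brX2)
    moreover
    have "g (br Y S) A + g (br Y A) S = 0" using calculation by (simp add: add.commute)
    moreover
    have "g (br Y A) T + g (br Y T) A = 0" by (simp add: GS orthf AX brX1 brX2)
    moreover
    have "g (br Y T) A + g (br Y A) T = 0" using calculation by (simp add: add.commute)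
    moreover
    have "g (br Y B) B + g (br Y B) B = 0" by (simp add: GS orthf AX brX1 brX2)
    moreover
    have "g (br Y B) C + g (br Y C) B = 0" by (simp only: HX(6) cc(6))
    moreover
    have "g (br Y C) B + g (br Y B) C = 0" using calculation by (simp add: add.commute)
    moreover
    have "g (br Y B) R + g (br Y R) B = 0" by (simp add: GS orthf AX brX1 brX2)
    moreover
    have "g (br Y R) B + g (br Y B) R = 0" using calculation by (simp add: add.commute)
    moreover
    have "g (br Y B) S + g (br Y S) B = 0" by (simp add: GS orthf AX brX1 brX2)
    moreover
    have "g (br Y S) B + g (br Y B) S = 0" using calculation by (simp add: add.commute)
    moreover
    have "g (br Y B) T + g (br Y T) B = 0" by (simp add: GS orthf AX brX1 brX2)
    moreover
    have "g (br Y T) B + g (br Y B) T = 0" using calculation by (simp add: add.commute)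
    moreover
    have "g (br Y C) C + g (br Y C) C = 0" by (simp add: GS orthf AX brX1 brX2)
    moreover
    have "g (br Y C) R + g (br Y R) C = 0" by (simp add: GS orthf AX brX1 brX2)
    moreover
    have "g (br Y R) C + g (br Y C) R = 0" using calculation by (simp add: add.commute)
    moreover
    have "g (br Y C) S + g (br Y S) C = 0" by (simp add: GS orthf AX brX1 brX2)
    moreover
    have "g (br Y S) C + g (br Y C) S = 0" using calculation by (simp add: add.commute)
    moreover
    have "g (br Y C) T + g (br Y T) C = 0" by (simp add: GS orthf AX brX1 brX2)
    moreover
    have "g (br Y T) C + g (br Y C) T = 0" using calculation by (simp add: add.commute)
    moreover
    have "g (br Y R) R + g (br Y R) R = 0" by (simp add: GS orthf AX brX1 brX2)
    moreover
    have "g (br Y R) S + g (br Y S) R = 0" by (simp only: HX(8) cc(8))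
    moreover
    have "g (br Y S) R + g (br Y R) S = 0" using calculation by (simp add: add.commute)
    moreover
    have "g (br Y R) T + g (br Y T) R = 0" by (simp only: HX(10) cc(10))
    moreover
    have "g (br Y T) R + g (br Y R) T = 0" using calculation by (simp add: add.commute)
    moreover
    have "g (br Y S) S + g (br Y S) S = 0" by (simp add: GS orthf AX brX1 brX2)
    moreover
    have "g (br Y S) T + g (br Y T) S = 0" by (simp only: HX(12) cc(12))
    moreover
    have "g (br Y T) S + g (br Y S) T = 0" using calculation by (simp add: add.commute)
    moreover
    have "g (br Y T) T + g (br Y T) T = 0" by (simp add: GS orthf AX brX1 brX2)
      ultimately show ?thesis using that by auto
    qed
    have HZ: "g (br Z E) F + g (br Z F) E = 0" if base: "\<And>E F. E \<in> {A,B,C,R,S,T} \<Longrightarrow> F \<in> {A,B,C,R,S,T} \<Longrightarrow> g (br Z E) F + g (br Z F) E = 0"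
       and E: "E \<in> k" and F: "F \<in> k" for Z E F
    proof -
      have qb: "bilinear (\<lambda>E F. g (br Z E) F + g (br Z F) E)"
        unfolding bilinear_def by (auto intro!: linearI simp: GS BRS algebra_simps)
      have zb: "bilinear (\<lambda>E F. (0::real))"
        unfolding bilinear_def by (auto intro!: linearI)
      show ?thesis
        by (rule bilinear_eq[OF qb zb, of k "{A,B,C,R,S,T}" k "{A,B,C,R,S,T}" E F, simplified])
          (use E F base k_def in auto)
    qed
    show "totally_geodesic_fol g br k"
      unfolding totally_geodesic_fol_def
    proof (intro ballI)
      fix E F assume E: "E \<in> k" and F: "F \<in> k"
      show "BV g br k E F = 0"
      proof (subst BVeq, intro ballI)
        fix w assume w: "w \<in> m"
        have "g (br w E) F + g (br w F) E =
          g (br ((g X X * g w X) *\<^sub>R X + (g Y Y * g w Y) *\<^sub>R Y) E) F +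
          g (br ((g X X * g w X) *\<^sub>R X + (g Y Y * g w Y) *\<^sub>R Y) F) E"
          using expm[OF w] by metis
        also have "\<dots> = (g X X * g w X) * (g (br X E) F + g (br X F) E) +
            (g Y Y * g w Y) * (g (br Y E) F + g (br Y F) E)"
          by (simp add: GS BRS algebra_simps)
        also have "\<dots> = 0" using HZ[OF baseX E F] HZ[OF baseY E F] by simp
        finally show "g (br w E) F + g (br w F) E = 0" .
      qed
    qed
  qed
  show ?thesis using semi minimal tg by blast
qed

theorem theorem6p3:
  fixes g :: "'v::real_vector \<Rightarrow> 'v \<Rightarrow> real" and br :: "'v \<Rightarrow> 'v \<Rightarrow> 'v"
    and A B C R S T X Y :: 'v and k :: "'v set"
    and b11 b21 c11 c21 c12 c22 s14 s24 t14 t24 t15 t25 :: real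
  assumes lie: "lie_bracket br"
    and metric: "semi_riem_metric g"
    and onb: "orthonormal_basis g UNIV [A, B, C, R, S, T, X, Y]"
    and k_def: "k = span {A, B, C, R, S, T}"
    and su2_1: "br A B = 2 *\<^sub>R C" "br C A = 2 *\<^sub>R B" "br B C = 2 *\<^sub>R A"
    and su2_2: "br R S = 2 *\<^sub>R T" "br T R = 2 *\<^sub>R S" "br S T = 2 *\<^sub>R R"
    and prod: "br A R = 0" "br A S = 0" "br A T = 0"
              "br B R = 0" "br B S = 0" "br B T = 0"
              "br C R = 0" "br C S = 0" "br C T = 0"
    and brX1: "br A X = - (b11 *\<^sub>R B) - c11 *\<^sub>R C" "br A Y = - (b21 *\<^sub>R B) - c21 *\<^sub>R C"
              "br B X = b11 *\<^sub>R A - c12 *\<^sub>R C" "br B Y = b21 *\<^sub>R A - c22 *\<^sub>R C"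
              "br C X = c11 *\<^sub>R A + c12 *\<^sub>R B" "br C Y = c21 *\<^sub>R A + c22 *\<^sub>R B"
    and brX2: "br R X = - (s14 *\<^sub>R S) - t14 *\<^sub>R T" "br R Y = - (s24 *\<^sub>R S) - t24 *\<^sub>R T"
              "br S X = s14 *\<^sub>R R - t15 *\<^sub>R T" "br S Y = s24 *\<^sub>R R - t25 *\<^sub>R T"
              "br T X = t14 *\<^sub>R R + t15 *\<^sub>R S" "br T Y = t24 *\<^sub>R R + t25 *\<^sub>R S"
    and conf: "conformal_fol g br k"
  shows "semi_riem_fol g br k \<and> minimal_fol g br k \<and>
    (totally_geodesic_fol g br k \<longleftrightarrow>
      ((g B B - g A A) * b11 = 0 \<and> (g B B - g A A) * b21 = 0 \<and>
       (g C C - g A A) * c11 = 0 \<and> (g C C - g A A) * c21 = 0 \<and>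
       (g C C - g B B) * c12 = 0 \<and> (g C C - g B B) * c22 = 0 \<and>
       (g S S - g R R) * s14 = 0 \<and> (g S S - g R R) * s24 = 0 \<and>
       (g T T - g R R) * t14 = 0 \<and> (g T T - g R R) * t24 = 0 \<and>
       (g T T - g S S) * t15 = 0 \<and> (g T T - g S S) * t25 = 0))"
proof -
  from metric have gb: "bilinear g" and gs: "\<And>x y. g x y = g y x"
    and gnd: "\<And>x. (\<forall>y. g x y = 0) \<Longrightarrow> x = 0" unfolding semi_riem_metric_def by auto
  from lie have bb: "bilinear br" and brxx: "\<And>x. br x x = 0" unfolding lie_bracket_def by auto
  have anti: "br y x = - br x y" for x y
  proof -
    have "br (x + y) (x + y) = br x y + br y x"
      by (simp only: bilinear_ladd[OF bb] bilinear_radd[OF bb] brxx[of x] brxx[of y] add_0_left add_0_right) (rule add.commute)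
    then have "br x y + br y x = 0" by (metis brxx)
    then show ?thesis by (simp add: eq_neg_iff_add_eq_0 add.commute)
  qed
  from onb have spanU: "span {A,B,C,R,S,T,X,Y} = UNIV"
    unfolding orthonormal_basis_def by simp
  from onb have orthc: "\<forall>i<8. \<forall>j<8. i \<noteq> j \<longrightarrow> g ([A, B, C, R, S, T, X, Y]!i) ([A, B, C, R, S, T, X, Y]!j) = 0"
    unfolding orthonormal_basis_def by simp
  from onb have nrmc: "\<forall>i<8. g ([A, B, C, R, S, T, X, Y]!i) ([A, B, C, R, S, T, X, Y]!i) = 1 \<or> g ([A, B, C, R, S, T, X, Y]!i) ([A, B, C, R, S, T, X, Y]!i) = -1"
    unfolding orthonormal_basis_def by simp
  have o0: "g A B = 0" using orthc[rule_format, of 0 1] by simp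
  have o1: "g A C = 0" using orthc[rule_format, of 0 2] by simp
  have o2: "g A R = 0" using orthc[rule_format, of 0 3] by simp
  have o3: "g A S = 0" using orthc[rule_format, of 0 4] by simp
  have o4: "g A T = 0" using orthc[rule_format, of 0 5] by simp
  have o5: "g A X = 0" using orthc[rule_format, of 0 6] by simp
  have o6: "g A Y = 0" using orthc[rule_format, of 0 7] by simp
  have o7: "g B A = 0" using orthc[rule_format, of 1 0] by simp
  have o8: "g B C = 0" using orthc[rule_format, of 1 2] by simp
  have o9: "g B R = 0" using orthc[rule_format, of 1 3] by simp
  have o10: "g B S = 0" using orthc[rule_format, of 1 4] by simp
  have o11: "g B T = 0" using orthc[rule_format, of 1 5] by simp
  have o12: "g B X = 0" using orthc[rule_format, of 1 6] by simp
  have o13: "g B Y = 0" using orthc[rule_format, of 1 7] by simp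
  have o14: "g C A = 0" using orthc[rule_format, of 2 0] by simp
  have o15: "g C B = 0" using orthc[rule_format, of 2 1] by simp
  have o16: "g C R = 0" using orthc[rule_format, of 2 3] by simp
  have o17: "g C S = 0" using orthc[rule_format, of 2 4] by simp
  have o18: "g C T = 0" using orthc[rule_format, of 2 5] by simp
  have o19: "g C X = 0" using orthc[rule_format, of 2 6] by simp
  have o20: "g C Y = 0" using orthc[rule_format, of 2 7] by simp
  have o21: "g R A = 0" using orthc[rule_format, of 3 0] by simp
  have o22: "g R B = 0" using orthc[rule_format, of 3 1] by simp
  have o23: "g R C = 0" using orthc[rule_format, of 3 2] by simp
  have o24: "g R S = 0" using orthc[rule_format, of 3 4] by simp
  have o25: "g R T = 0" using orthc[rule_format, of 3 5] by simp
  have o26: "g R X = 0" using orthc[rule_format, of 3 6] by simp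
  have o27: "g R Y = 0" using orthc[rule_format, of 3 7] by simp
  have o28: "g S A = 0" using orthc[rule_format, of 4 0] by simp
  have o29: "g S B = 0" using orthc[rule_format, of 4 1] by simp
  have o30: "g S C = 0" using orthc[rule_format, of 4 2] by simp
  have o31: "g S R = 0" using orthc[rule_format, of 4 3] by simp
  have o32: "g S T = 0" using orthc[rule_format, of 4 5] by simp
  have o33: "g S X = 0" using orthc[rule_format, of 4 6] by simp
  have o34: "g S Y = 0" using orthc[rule_format, of 4 7] by simp
  have o35: "g T A = 0" using orthc[rule_format, of 5 0] by simp
  have o36: "g T B = 0" using orthc[rule_format, of 5 1] by simp
  have o37: "g T C = 0" using orthc[rule_format, of 5 2] by simp
  have o38: "g T R = 0" using orthc[rule_format, of 5 3] by simp
  have o39: "g T S = 0" using orthc[rule_format, of 5 4] by simp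
  have o40: "g T X = 0" using orthc[rule_format, of 5 6] by simp
  have o41: "g T Y = 0" using orthc[rule_format, of 5 7] by simp
  have o42: "g X A = 0" using orthc[rule_format, of 6 0] by simp
  have o43: "g X B = 0" using orthc[rule_format, of 6 1] by simp
  have o44: "g X C = 0" using orthc[rule_format, of 6 2] by simp
  have o45: "g X R = 0" using orthc[rule_format, of 6 3] by simp
  have o46: "g X S = 0" using orthc[rule_format, of 6 4] by simp
  have o47: "g X T = 0" using orthc[rule_format, of 6 5] by simp
  have o48: "g X Y = 0" using orthc[rule_format, of 6 7] by simp
  have o49: "g Y A = 0" using orthc[rule_format, of 7 0] by simp
  have o50: "g Y B = 0" using orthc[rule_format, of 7 1] by simp
  have o51: "g Y C = 0" using orthc[rule_format, of 7 2] by simp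
  have o52: "g Y R = 0" using orthc[rule_format, of 7 3] by simp
  have o53: "g Y S = 0" using orthc[rule_format, of 7 4] by simp
  have o54: "g Y T = 0" using orthc[rule_format, of 7 5] by simp
  have o55: "g Y X = 0" using orthc[rule_format, of 7 6] by simp
  note orthf = o0 o1 o2 o3 o4 o5 o6 o7 o8 o9 o10 o11 o12 o13 o14 o15 o16 o17 o18 o19 o20 o21 o22 o23 o24 o25 o26 o27 o28 o29 o30 o31 o32 o33 o34 o35 o36 o37 o38 o39 o40 o41 o42 o43 o44 o45 o46 o47 o48 o49 o50 o51 o52 o53 o54 o55
  have nrm: "g A A = 1 \<or> g A A = -1" "g B B = 1 \<or> g B B = -1" "g C C = 1 \<or> g C C = -1"
    "g R R = 1 \<or> g R R = -1" "g S S = 1 \<or> g S S = -1" "g T T = 1 \<or> g T T = -1"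
    "g X X = 1 \<or> g X X = -1" "g Y Y = 1 \<or> g Y Y = -1"
    using nrmc[rule_format, of 0] nrmc[rule_format, of 1] nrmc[rule_format, of 2] nrmc[rule_format, of 3] nrmc[rule_format, of 4] nrmc[rule_format, of 5] nrmc[rule_format, of 6] nrmc[rule_format, of 7] by simp_all
  have sq: "g A A * g A A = 1" "g B B * g B B = 1" "g C C * g C C = 1"
    "g R R * g R R = 1" "g S S * g S S = 1" "g T T * g T T = 1"
    "g X X * g X X = 1" "g Y Y * g Y Y = 1" using nrm by auto
  show ?thesis
    by (rule core[OF gb gs gnd bb anti spanU orthf sq k_def su2_1 su2_2 prod brX1 brX2])
qed

end
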